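(* Let $\varepsilon\in(0,1)$ and let $C=\Omega\left(\frac{1}{\varepsilon}\right)$. Any one-pass streaming algorithm that outputs a $(1+\varepsilon)$-approximation of the number of distinct elements on streams whose frequency vector has $C$ coordinates with frequency more than $1$ must use $\Omega\left(\min\left(\frac{1}{\varepsilon^2},C\right)\right)$ bits of space.
   Context: Streaming model: a stream of item insertions from the universe $[n]$ defines a frequency vector $f$ ($f_i$ is the number of occurrences of $i$); the number of distinct elements is $F_0=|\{i:f_i\neq 0\}|$. A $(1+\varepsilon)$-approximation to $F_0$ is a value $\hat F$ with $(1-\varepsilon)F_0\le\hat F\le(1+\varepsilon)F_0$, required to hold with constant probability (e.g., at least $\frac23$). *)

theory Defs
  imports "HOL-Probability.Probability"
begin

definition freq :: "nat list \<Rightarrow> nat \<Rightarrow> nat" where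
  "freq xs i = count_list xs i"

definition F0 :: "nat list \<Rightarrow> nat" where
  "F0 xs = card {i. freq xs i \<noteq> 0}"

definition num_heavy :: "nat list \<Rightarrow> nat" where
  "num_heavy xs = card {i. freq xs i > 1}"

text \<open>A randomized one-pass streaming algorithm: a random seed r drawn from a pmf
  (public randomness, not charged to space), an initial memory state, an update
  function processing one stream item, and an output function.\<close>

definition run_stream ::
  "('r \<Rightarrow> bool list) \<Rightarrow> ('r \<Rightarrow> nat \<Rightarrow> bool list \<Rightarrow> bool list) \<Rightarrow> 'r \<Rightarrow> nat list \<Rightarrow> bool list" where
  "run_stream init upd r xs = fold (upd r) xs (init r)"

definition uses_space ::
  "'r pmf \<Rightarrow> ('r \<Rightarrow> bool list) \<Rightarrow> ('r \<Rightarrow> nat \<Rightarrow> bool list \<Rightarrow> bool list) \<Rightarrow> nat \<Rightarrow> nat \<Rightarrow> bool" where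
  "uses_space R init upd n s \<longleftrightarrow>
     (\<forall>r \<in> set_pmf R. length (init r) = s \<and>
        (\<forall>x < n. \<forall>st. length st = s \<longrightarrow> length (upd r x st) = s))"

definition approximates_F0 ::
  "'r pmf \<Rightarrow> ('r \<Rightarrow> bool list) \<Rightarrow> ('r \<Rightarrow> nat \<Rightarrow> bool list \<Rightarrow> bool list) \<Rightarrow>
   ('r \<Rightarrow> bool list \<Rightarrow> real) \<Rightarrow> nat \<Rightarrow> real \<Rightarrow> nat \<Rightarrow> bool" where
  "approximates_F0 R init upd out n eps C \<longleftrightarrow>
     (\<forall>xs. set xs \<subseteq> {..<n} \<and> num_heavy xs = C \<longrightarrow>
        measure_pmf.prob R
          {r. (1 - eps) * real (F0 xs) \<le> out r (run_stream init upd r xs) \<and>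
              out r (run_stream init upd r xs) \<le> (1 + eps) * real (F0 xs)} \<ge> 2/3)"

end

theory Submission
  imports Defs
begin

lemma cbin_even: "((2*k) choose k)^2 * (2*k+1) \<le> 16^k"
proof (induction k)
  case 0 then show ?case by simp
next
  case (Suc k)
  define b where "b = (2*k) choose k"
  define b' where "b' = (2*Suc k) choose Suc k"
  have rec: "(k+1) * b' = 2*(2*k+1) * b"
  proof -
    define c where "c = Suc (2*k) choose k"
    have h1: "Suc k * (Suc (2*k) choose Suc k) = Suc (2*k) * ((2*k) choose k)"
      using Suc_times_binomial_eq[of "2*k" k] by (simp add: mult.commute)
    have h2: "Suc (2*k) choose Suc k = c"
      unfolding c_def using binomial_symmetric[of "Suc k" "Suc (2*k)"] by simp
    have h3: "b' = 2 * c"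
    proof -
      have "b' = (Suc (Suc (2*k))) choose (Suc k)" unfolding b'_def by simp
      also have "\<dots> = (Suc (2*k) choose k) + (Suc (2*k) choose Suc k)" by simp
      finally show ?thesis using h2 unfolding c_def by simp
    qed
    have "(k+1) * b' = 2 * (Suc k * c)" using h3 by simp
    also have "\<dots> = 2 * (Suc (2*k) * b)" using h1 h2 unfolding b_def by simp
    finally show ?thesis by simp
  qed
  have IH: "b^2 * (2*k+1) \<le> 16^k" using Suc.IH b_def by simp
  have "(k+1)^2 * (b'^2 * (2*k+3)) = ((k+1) * b')^2 * (2*k+3)" by (simp only: power_mult_distrib mult.assoc)
  also have "\<dots> = (2*(2*k+1) * b)^2 * (2*k+3)" using rec by simp
  also have "\<dots> = 2^2*(2*k+1)^2*(2*k+3) * b^2" by (simp only: power_mult_distrib ac_simps)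
  also have "\<dots> = 4*(2*k+1)^2*(2*k+3) * b^2" by simp
  also have "\<dots> = 4*(2*k+1)*(2*k+3) * (b^2*(2*k+1))" by (simp add: power2_eq_square algebra_simps)
  also have "\<dots> \<le> 4*(2*k+1)*(2*k+3) * 16^k" using IH by simp
  also have "\<dots> \<le> 4*(2*k+2)^2 * 16^k"
    by (intro mult_right_mono) (auto simp: power2_eq_square algebra_simps)
  also have "\<dots> = (k+1)^2 * 16^(Suc k)" by (simp add: power2_eq_square algebra_simps)
  finally have "(k+1)^2 * (b'^2 * (2*k+3)) \<le> (k+1)^2 * 16^(Suc k)" .
  then have fin: "b'^2 * (2*k+3) \<le> 16^(Suc k)" by simp
  have e: "2 * Suc k + 1 = 2*k+3" by simp
  show ?case unfolding e using fin unfolding b'_def .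
qed

lemma cbin: "(d choose (d div 2))^2 * d \<le> 4^d"
proof (cases "even d")
  case True
  then obtain k where d: "d = 2*k" by blast
  have "(d choose (d div 2))^2 * d \<le> ((2*k) choose k)^2 * (2*k+1)" using d by simp
  also have "\<dots> \<le> 16^k" by (rule cbin_even)
  also have "\<dots> = 4^d" using d by (simp add: power_mult)
  finally show ?thesis .
next
  case False
  then obtain k where d: "d = 2*k+1" using oddE by blast
  have "(2*(k+1)) choose (k+1) = (Suc (Suc (2*k))) choose (Suc k)" by simp
  also have "\<dots> = (Suc (2*k) choose k) + (Suc (2*k) choose Suc k)" by simp
  also have "Suc (2*k) choose Suc k = Suc (2*k) choose k"
    using binomial_symmetric[of "Suc k" "Suc (2*k)"] by simp
  finally have e: "(2*(k+1)) choose (k+1) = 2 * (d choose (d div 2))" using d by simp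
  have "4 * ((d choose (d div 2))^2 * d) \<le> (2 * (d choose (d div 2)))^2 * (2*(k+1)+1)"
    using d by (simp add: power2_eq_square algebra_simps)
  also have "\<dots> \<le> 16^(k+1)" using cbin_even[of "k+1"] e by simp
  also have "\<dots> = 4 * 4^d" using d by (simp add: power_mult power_add)
  finally show ?thesis by simp
qed

definition sd :: "nat set \<Rightarrow> nat set \<Rightarrow> nat set" where
  "sd X Y = (X - Y) \<union> (Y - X)"
definition ham :: "nat set \<Rightarrow> nat set \<Rightarrow> nat" where
  "ham X Y = card (sd X Y)"

lemma fiber_card:
  assumes X': "X' \<subseteq> {..<m}" and D: "D \<subseteq> {..<m}"
  shows "card {Y \<in> Pow {..<m}. card (D \<inter> sd X' Y) = j} \<le> (card D choose j) * 2^(m - card D)"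
proof -
  let ?F = "\<lambda>Y. (D \<inter> sd X' Y, sd X' Y - D)"
  have inj: "inj_on ?F {Y \<in> Pow {..<m}. card (D \<inter> sd X' Y) = j}"
  proof (rule inj_onI)
    fix Y Z assume "Y \<in> {Y \<in> Pow {..<m}. card (D \<inter> sd X' Y) = j}" "Z \<in> {Y \<in> Pow {..<m}. card (D \<inter> sd X' Y) = j}"
      and e: "?F Y = ?F Z"
    from e have "sd X' Y = sd X' Z" by auto
    then show "Y = Z" unfolding sd_def by blast
  qed
  have img: "?F ` {Y \<in> Pow {..<m}. card (D \<inter> sd X' Y) = j} \<subseteq> {B. B \<subseteq> D \<and> card B = j} \<times> Pow ({..<m} - D)"
    using X' unfolding sd_def by auto
  have "card {Y \<in> Pow {..<m}. card (D \<inter> sd X' Y) = j} \<le> card ({B. B \<subseteq> D \<and> card B = j} \<times> Pow ({..<m} - D))"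
  proof (rule card_inj_on_le[OF inj img])
    have fD: "finite D" using D finite_subset by blast
    have "finite {B. B \<subseteq> D \<and> card B = j}" by (rule finite_subset[of _ "Pow D"]) (use fD in auto)
    then show "finite ({B. B \<subseteq> D \<and> card B = j} \<times> Pow ({..<m} - D))" by auto
  qed
  also have "\<dots> = (card D choose j) * 2^(m - card D)"
    using D by (simp add: card_cartesian_product n_subsets finite_subset card_Pow card_Diff_subset)
  finally show ?thesis .
qed

lemma ham_diff:
  assumes "X \<subseteq> {..<m}" "X' \<subseteq> {..<m}" "Y \<subseteq> {..<m}"
  shows "int (ham X Y) - int (ham X' Y) = int (card (sd X X')) - 2 * int (card (sd X X' \<inter> sd X' Y))"
proof -
  let ?D = "sd X X'"
  have fin: "finite A" if "A \<subseteq> {..<m}" for A using that finite_subset by blast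
  have s: "sd A B \<subseteq> {..<m}" if "A \<subseteq> {..<m}" "B \<subseteq> {..<m}" for A B using that unfolding sd_def by auto
  have split: "card A = card (A \<inter> ?D) + card (A - ?D)" if "A \<subseteq> {..<m}" for A
  proof -
    have "A = (A \<inter> ?D) \<union> (A - ?D)" by blast
    then have "card A = card ((A \<inter> ?D) \<union> (A - ?D))" by simp
    also have "\<dots> = card (A \<inter> ?D) + card (A - ?D)"
      by (rule card_Un_disjoint) (use fin[OF that] in auto)
    finally show ?thesis .
  qed
  have e1: "sd X Y \<inter> ?D = ?D - sd X' Y" unfolding sd_def by blast
  have e2: "sd X Y - ?D = sd X' Y - ?D" unfolding sd_def by blast
  have e3: "sd X' Y \<inter> ?D = ?D \<inter> sd X' Y" by blast
  have c: "card (?D - sd X' Y) = card ?D - card (?D \<inter> sd X' Y)"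
    by (rule card_Diff_subset_Int) (use fin[OF s[OF assms(1,2)]] in auto)
  have le: "card (?D \<inter> sd X' Y) \<le> card ?D"
    by (rule card_mono) (use fin[OF s[OF assms(1,2)]] in auto)
  show ?thesis
    using split[OF s[OF assms(1,3)]] split[OF s[OF assms(2,3)]] e1 e2 e3 c le
    unfolding ham_def by simp
qed

lemma anti:
  assumes X: "X \<subseteq> {..<m}" and X': "X' \<subseteq> {..<m}"
  shows "card {Y \<in> Pow {..<m}. \<bar>int (ham X Y) - int (ham X' Y)\<bar> \<le> int T}
         \<le> (T+1) * (card (sd X X') choose (card (sd X X') div 2)) * 2^(m - card (sd X X'))"
proof -
  define D where "D = sd X X'"
  define d where "d = card D"
  have D: "D \<subseteq> {..<m}" using X X' unfolding D_def sd_def by auto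
  define J where "J = {(d - T) div 2 .. (d + T) div 2}"
  have sub: "{Y \<in> Pow {..<m}. \<bar>int (ham X Y) - int (ham X' Y)\<bar> \<le> int T}
        \<subseteq> (\<Union>j\<in>J. {Y \<in> Pow {..<m}. card (D \<inter> sd X' Y) = j})"
  proof
    fix Y assume "Y \<in> {Y \<in> Pow {..<m}. \<bar>int (ham X Y) - int (ham X' Y)\<bar> \<le> int T}"
    then have Y: "Y \<subseteq> {..<m}" and b: "\<bar>int (ham X Y) - int (ham X' Y)\<bar> \<le> int T" by auto
    have "\<bar>int d - 2 * int (card (D \<inter> sd X' Y))\<bar> \<le> int T"
      using b ham_diff[OF X X' Y] unfolding d_def D_def by simp
    then have "card (D \<inter> sd X' Y) \<in> J" unfolding J_def by auto
    then show "Y \<in> (\<Union>j\<in>J. {Y \<in> Pow {..<m}. card (D \<inter> sd X' Y) = j})" using Y by auto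
  qed
  have "card {Y \<in> Pow {..<m}. \<bar>int (ham X Y) - int (ham X' Y)\<bar> \<le> int T}
       \<le> card (\<Union>j\<in>J. {Y \<in> Pow {..<m}. card (D \<inter> sd X' Y) = j})"
    by (rule card_mono[OF _ sub]) (auto simp: J_def)
  also have "\<dots> \<le> (\<Sum>j\<in>J. card {Y \<in> Pow {..<m}. card (D \<inter> sd X' Y) = j})"
    by (rule card_UN_le) (simp add: J_def)
  also have "\<dots> \<le> (\<Sum>j\<in>J. (d choose (d div 2)) * 2^(m - d))"
  proof (rule sum_mono)
    fix j assume "j \<in> J"
    have "card {Y \<in> Pow {..<m}. card (D \<inter> sd X' Y) = j} \<le> (d choose j) * 2^(m - d)"
      using fiber_card[OF X' D, of j] unfolding d_def .
    also have "\<dots> \<le> (d choose (d div 2)) * 2^(m - d)" by (simp add: binomial_maximum)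
    finally show "card {Y \<in> Pow {..<m}. card (D \<inter> sd X' Y) = j} \<le> (d choose (d div 2)) * 2^(m - d)" .
  qed
  also have "\<dots> = card J * ((d choose (d div 2)) * 2^(m - d))" by simp
  also have "\<dots> \<le> (T+1) * ((d choose (d div 2)) * 2^(m - d))"
  proof (rule mult_right_mono)
    show "card J \<le> T + 1" unfolding J_def by simp
  qed simp
  finally show ?thesis unfolding d_def D_def by (simp only: mult.assoc)
qed

lemma ball_bound:
  assumes "k \<le> m"
  shows "4^m * card {Z \<in> Pow {..<m}. card Z \<le> k} \<le> 4^k * 5^m"
proof -
  have sub: "{Z \<in> Pow {..<m}. card Z \<le> k} \<subseteq> (\<Union>j\<in>{..k}. {Z. Z \<subseteq> {..<m} \<and> card Z = j})" by auto
  have "card {Z \<in> Pow {..<m}. card Z \<le> k} \<le> card (\<Union>j\<in>{..k}. {Z. Z \<subseteq> {..<m} \<and> card Z = j})"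
    by (rule card_mono[OF _ sub]) auto
  also have "\<dots> \<le> (\<Sum>j\<le>k. card {Z. Z \<subseteq> {..<m} \<and> card Z = j})" by (rule card_UN_le) simp
  also have "\<dots> = (\<Sum>j\<le>k. m choose j)" by (simp add: n_subsets)
  finally have V: "card {Z \<in> Pow {..<m}. card Z \<le> k} \<le> (\<Sum>j\<le>k. m choose j)" .
  have "4^m * card {Z \<in> Pow {..<m}. card Z \<le> k} \<le> 4^m * (\<Sum>j\<le>k. m choose j)"
    using V by simp
  also have "\<dots> = (\<Sum>j\<le>k. (m choose j) * 4^m)" by (simp add: sum_distrib_right mult.commute)
  also have "\<dots> \<le> (\<Sum>j\<le>k. 4^k * ((m choose j) * 4^(m-j)))"
  proof (rule sum_mono)
    fix j assume "j \<in> {..k}"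
    then have "4^m \<le> (4::nat)^(k + (m - j))" by (intro power_increasing) auto
    then have "(4::nat)^m \<le> 4^k * 4^(m-j)" by (simp add: power_add)
    then show "(m choose j) * 4^m \<le> 4^k * ((m choose j) * 4^(m-j))"
      by (metis mult.left_commute mult_le_mono2)
  qed
  also have "\<dots> = 4^k * (\<Sum>j\<le>k. (m choose j) * 4^(m-j))" by (simp add: sum_distrib_left)
  also have "\<dots> \<le> 4^k * (\<Sum>j\<le>m. (m choose j) * 4^(m-j))"
    by (intro mult_left_mono sum_mono2) (use assms in auto)
  also have "(\<Sum>j\<le>m. (m choose j) * 4^(m-j)) = 5^m"
    using binomial_ring[of "1::nat" 4 m] by simp
  finally show ?thesis .
qed

lemma final_arith:
  fixes m s k V G :: nat
  assumes "2^m \<le> 6 * 2^s * V" "4^m * V \<le> 4^k * 5^m" "4 * s \<le> m" "16 * k \<le> m" "10 \<le> m"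
  shows False
proof -
  have "(8::nat)^m = (4*2)^m" by simp
  also have "\<dots> = 4^m * 2^m" by (rule power_mult_distrib)
  also have "\<dots> \<le> 4^m * (6 * 2^s * V)" using assms(1) by simp
  also have "\<dots> = 6 * 2^s * (4^m * V)" by simp
  also have "\<dots> \<le> 6 * 2^s * (4^k * 5^m)" using assms(2) by simp
  finally have a: "(8::nat)^m \<le> 6 * 2^s * 4^k * 5^m" by simp
  have "((8::nat)^m)^8 \<le> (6 * 2^s * 4^k * 5^m)^8" by (rule power_mono[OF a]) simp
  moreover have "((8::nat)^m)^8 = 2^(24*m)"
  proof -
    have "(8::nat)^m = (2^3)^m" by simp
    also have "\<dots> = 2^(3*m)" by (simp add: power_mult)
    finally show ?thesis by (simp add: power_mult[symmetric])
  qed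
  moreover have "((6::nat) * 2^s * 4^k * 5^m)^8 = 6^8 * 2^(8 * s + 16 * k) * (5^8)^m"
  proof -
    have "((6::nat) * 2^s * 4^k * 5^m)^8 = 6^8 * (2^s)^8 * (4^k)^8 * (5^m)^8" by (simp add: power_mult_distrib)
    moreover have "((2::nat)^s)^8 = 2^(8 * s)" by (simp add: power_mult[symmetric] mult.commute)
    moreover have "((4::nat)^k)^8 = 2^(16*k)"
    proof -
      have "((4::nat)^k)^8 = 4^(k*8)" by (simp add: power_mult)
      also have "\<dots> = (2^2)^(k*8)" by simp
      also have "\<dots> = 2^(2*(k*8))" by (rule power_mult[symmetric])
      also have "\<dots> = 2^(16*k)" by (simp add: mult.commute)
      finally show ?thesis .
    qed
    moreover have "((5::nat)^m)^8 = (5^8)^m" by (simp only: power_mult[symmetric] mult.commute)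
    ultimately show ?thesis by (simp add: power_add)
  qed
  ultimately have b: "(2::nat)^(24*m) \<le> 6^8 * 2^(8 * s + 16 * k) * (5^8)^m" by simp
  have "(2::nat)^(8 * s + 16 * k) \<le> 2^(3*m)" by (rule power_increasing) (use assms in auto)
  then have c: "(2::nat)^(24*m) \<le> 6^8 * 2^(3*m) * (5^8)^m" using b
    by (meson le_trans mult_le_mono1 mult_le_mono2)
  have p21: "(2::nat)^(21*m) = (2^21)^m" by (simp only: power_mult)
  have "(2::nat)^(24*m) = 2^(3*m + 21*m)" by simp
  also have "\<dots> = 2^(3*m) * 2^(21*m)" by (rule power_add)
  finally have e24: "(2::nat)^(24*m) = 2^(3*m) * (2^21)^m" using p21 by simp
  have m5: "(5::nat)^m * (5^8)^m \<le> (2^21)^m"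
    by (simp only: power_mult_distrib[symmetric]) (rule power_mono, auto)
  define A where "A = (2::nat)^(3*m)"
  define B where "B = (5::nat)^m"
  define Cc where "Cc = ((5::nat)^8)^m"
  define D where "D = (6::nat)^8"
  define E where "E = ((2::nat)^21)^m"
  have "A * E \<le> D * A * Cc" using c e24 unfolding A_def Cc_def D_def E_def by simp
  moreover have "B * Cc \<le> E" using m5 unfolding B_def Cc_def E_def by simp
  moreover have "A > 0" "Cc > 0" unfolding A_def Cc_def by simp_all
  ultimately have "B \<le> D"
  proof -
    assume h: "A * E \<le> D * A * Cc" "B * Cc \<le> E" "A > 0" "Cc > 0"
    have q1: "A * (B * Cc) \<le> A * E" using mult_le_mono2[OF h(2), of A] .
    have q2: "D * A * Cc = A * (D * Cc)" by (simp only: ac_simps)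
    have "A * (B * Cc) \<le> A * (D * Cc)" using le_trans[OF q1 h(1)] q2 by simp
    then have "B * Cc \<le> D * Cc" using h(3) by (meson mult_le_cancel1 not_less)
    then show "B \<le> D" using h(4) by (meson mult_le_cancel2 not_less)
  qed
  then have "(5::nat)^m \<le> 6^8" unfolding B_def D_def .
  moreover have "(5::nat)^10 \<le> 5^m" by (rule power_increasing) (use assms in auto)
  ultimately show False by simp
qed

lemma count_good:
  fixes okc :: "'a \<Rightarrow> nat" and N :: nat
  assumes finP: "finite P" and cardP: "card P = N" and le: "\<And>X. okc X \<le> N"
    and tot: "2/3 * (real N * real N) \<le> real (\<Sum>X\<in>P. okc X)"
  shows "N \<le> 6 * card {X \<in> P. 3 * N \<le> 5 * okc X}"
proof -
  define G where "G = {X \<in> P. 3 * N \<le> 5 * okc X}"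
  have GP: "G \<subseteq> P" unfolding G_def by auto
  have finG: "finite G" using finP GP finite_subset by blast
  define g where "g = real (card G)"
  define n where "n = real N"
  have s1: "(\<Sum>X\<in>P. okc X) = (\<Sum>X\<in>G. okc X) + (\<Sum>X\<in>P - G. okc X)"
    using sum.subset_diff[OF GP finP, of okc] by simp
  have s2: "(\<Sum>X\<in>G. okc X) \<le> card G * N"
    using sum_mono[of G okc "\<lambda>_. N"] le by simp
  have s3: "(\<Sum>X\<in>P - G. 5 * okc X) \<le> (\<Sum>X\<in>P - G. 3 * N)"
    by (rule sum_mono) (auto simp: G_def)
  have s3': "5 * (\<Sum>X\<in>P - G. okc X) \<le> card (P - G) * (3 * N)"
    using s3 by (simp add: sum_distrib_left)
  have cg: "card (P - G) = N - card G" using cardP GP finG by (simp add: card_Diff_subset)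
  have gN: "card G \<le> N" using card_mono[OF finP GP] cardP by simp
  have r1: "real (\<Sum>X\<in>P. okc X) \<le> g * n + real (\<Sum>X\<in>P - G. okc X)"
  proof -
    have "real (\<Sum>X\<in>P. okc X) = real (\<Sum>X\<in>G. okc X) + real (\<Sum>X\<in>P - G. okc X)"
      using s1 by (metis of_nat_add)
    moreover have "real (\<Sum>X\<in>G. okc X) \<le> g * n" unfolding g_def n_def
      using s2 by (metis of_nat_le_iff of_nat_mult)
    ultimately show ?thesis by linarith
  qed
  have r2: "5 * real (\<Sum>X\<in>P - G. okc X) \<le> (n - g) * (3 * n)"
  proof -
    have "real (5 * (\<Sum>X\<in>P - G. okc X)) \<le> real (card (P - G) * (3 * N))"
      using s3' by (metis of_nat_le_iff)
    moreover have "real (card (P - G)) = n - g" unfolding n_def g_def cg using gN by (simp add: of_nat_diff)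
    ultimately show ?thesis unfolding n_def by simp
  qed
  have r3: "(n - g) * (3 * n) = 3 * (n * n) - 3 * (g * n)" by (simp add: algebra_simps)
  have t: "2/3 * (n * n) \<le> real (\<Sum>X\<in>P. okc X)" using tot unfolding n_def .
  have "n * n \<le> n * (6 * g)"
  proof -
    have "n * (6 * g) = 6 * (g * n)" by simp
    then show ?thesis using r1 r2 r3 t by linarith
  qed
  moreover have "n \<ge> 0" unfolding n_def by simp
  moreover have "g \<ge> 0" unfolding g_def by simp
  ultimately have "n \<le> 6 * g"
  proof (cases "n = 0")
    case False
    assume h: "n * n \<le> n * (6 * g)" "n \<ge> 0"
    then have "n > 0" using False by simp
    then show ?thesis using h(1) mult_le_cancel_left_pos by blast
  qed simp
  then show ?thesis unfolding n_def g_def G_def by linarith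
qed

lemma sd_inj: "sd X Z = sd X' Z \<Longrightarrow> X = X'" unfolding sd_def by blast

lemma core:
  fixes f :: "nat set \<Rightarrow> 'b" and ok :: "nat set \<Rightarrow> nat set \<Rightarrow> bool" and T s m :: nat
  assumes finS: "finite S" and cardS: "card S \<le> 2^s" and fS: "\<And>X. X \<in> Pow {..<m} \<Longrightarrow> f X \<in> S"
    and cons: "\<And>X X' Y. X \<in> Pow {..<m} \<Longrightarrow> X' \<in> Pow {..<m} \<Longrightarrow> Y \<in> Pow {..<m} \<Longrightarrow>
        f X = f X' \<Longrightarrow> ok X Y \<Longrightarrow> ok X' Y \<Longrightarrow> \<bar>int (ham X Y) - int (ham X' Y)\<bar> \<le> int T"
    and cnt: "2/3 * 4^m \<le> real (card (SIGMA X:Pow {..<m}. {Y \<in> Pow {..<m}. ok X Y}))"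
    and big: "400 * (T+1)^2 < m"
  shows "m < 4 * s"
proof (rule ccontr)
  assume ns: "\<not> m < 4 * s"
  define P where "P = Pow {..<m::nat}"
  have finP: "finite P" and cardP: "card P = 2^m" unfolding P_def by (simp_all add: card_Pow)
  define okc where "okc X = card {Y \<in> P. ok X Y}" for X
  have okc_le: "okc X \<le> 2^m" for X
    unfolding okc_def using cardP card_mono[OF finP, of "{Y \<in> P. ok X Y}"] by auto
  define G where "G = {X \<in> P. 3 * 2^m \<le> 5 * okc X}"
  have finG: "finite G" and GP: "G \<subseteq> P" using finP unfolding G_def by auto
  have sumok: "card (SIGMA X:P. {Y \<in> P. ok X Y}) = (\<Sum>X\<in>P. okc X)"
    unfolding okc_def by (rule card_SigmaI) (use finP in auto)
  have Gbig: "2^m \<le> 6 * card G"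
  proof -
    have c2: "2/3*4^m \<le> real (card (SIGMA X:P. {Y\<in>P. ok X Y}))" using cnt unfolding P_def .
    have "(4::real)^m = (2*2)^m" by simp
    also have "\<dots> = 2^m * 2^m" by (rule power_mult_distrib)
    finally have e4: "(4::real)^m = real (2^m) * real (2^m)" by simp
    have "2/3 * (real (2^m) * real (2^m)) \<le> real (\<Sum>X\<in>P. okc X)" using c2 unfolding sumok e4 .
    from count_good[OF finP cardP okc_le this] show ?thesis unfolding G_def .
  qed
  define k where "k = m div 16"
  have close: "card (sd X X') \<le> k" if X: "X \<in> G" and X': "X' \<in> G" and fe: "f X = f X'" for X X'
  proof (rule ccontr)
    assume "\<not> card (sd X X') \<le> k"
    then have dk: "m < 16 * card (sd X X')" unfolding k_def by linarith
    define d where "d = card (sd X X')"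
    have XP: "X \<in> P" "X' \<in> P" using X X' GP by auto
    have dm: "d \<le> m"
    proof -
      have "sd X X' \<subseteq> {..<m}" using XP unfolding P_def sd_def by auto
      then show ?thesis unfolding d_def using card_mono[of "{..<m}" "sd X X'"] by simp
    qed
    let ?A = "{Y \<in> P. ok X Y}" and ?B = "{Y \<in> P. ok X' Y}"
    have "card (?A \<union> ?B) + card (?A \<inter> ?B) = card ?A + card ?B"
      using card_Un_Int[of ?A ?B] finP by auto
    moreover have "card (?A \<union> ?B) \<le> 2^m" using card_mono[OF finP, of "?A \<union> ?B"] cardP by auto
    moreover have "3 * 2^m \<le> 5 * card ?A" "3 * 2^m \<le> 5 * card ?B" using X X' unfolding G_def okc_def by auto
    ultimately have i1: "2^m \<le> 5 * card (?A \<inter> ?B)" by linarith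
    have "?A \<inter> ?B \<subseteq> {Y \<in> Pow {..<m}. \<bar>int (ham X Y) - int (ham X' Y)\<bar> \<le> int T}"
      using cons[of X X'] XP fe unfolding P_def by auto
    then have "card (?A \<inter> ?B) \<le> card {Y \<in> Pow {..<m}. \<bar>int (ham X Y) - int (ham X' Y)\<bar> \<le> int T}"
      by (intro card_mono) auto
    also have "\<dots> \<le> (T+1) * (d choose (d div 2)) * 2^(m - d)"
      using anti[of X m X' T] XP unfolding P_def d_def by auto
    finally have "2^m \<le> 5 * ((T+1) * (d choose (d div 2)) * 2^(m - d))" using i1 by linarith
    moreover have "(2::nat)^m = 2^d * 2^(m-d)" using dm by (simp add: power_add[symmetric])
    ultimately have "2^d * 2^(m-d) \<le> (5 * (T+1) * (d choose (d div 2))) * 2^(m - d)" by (simp add: algebra_simps)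
    then have le1: "2^d \<le> 5 * (T+1) * (d choose (d div 2))" by simp
    have "(2^d)^2 \<le> (5 * (T+1) * (d choose (d div 2)))^2" by (rule power_mono[OF le1]) simp
    moreover have "((2::nat)^d)^2 = 4^d"
    proof -
      have "((2::nat)^d)^2 = (2^2)^d" by (simp only: power_mult[symmetric] mult.commute)
      then show ?thesis by simp
    qed
    moreover have "(5 * (T+1) * (d choose (d div 2)))^2 = 25 * (T+1)^2 * (d choose (d div 2))^2"
      by (simp only: power_mult_distrib) (simp add: power2_eq_square)
    ultimately have "4^d \<le> 25 * (T+1)^2 * (d choose (d div 2))^2" by simp
    then have "4^d * d \<le> 25 * (T+1)^2 * ((d choose (d div 2))^2 * d)" by (simp add: algebra_simps)
    also have "\<dots> \<le> 25 * (T+1)^2 * 4^d" using cbin[of d] by simp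
    finally have "d \<le> 25 * (T+1)^2" by simp
    then show False using dk big unfolding d_def by linarith
  qed
  define V where "V = card {Z \<in> Pow {..<m}. card Z \<le> k}"
  have fib: "card {X \<in> G. f X = \<sigma>} \<le> V" for \<sigma>
  proof (cases "{X \<in> G. f X = \<sigma>} = {}")
    case True show ?thesis unfolding True by simp
  next
    case False
    then obtain X0 where X0: "X0 \<in> G" "f X0 = \<sigma>" by auto
    have "inj_on (\<lambda>X. sd X X0) {X \<in> G. f X = \<sigma>}" by (rule inj_onI) (use sd_inj in blast)
    moreover have "(\<lambda>X. sd X X0) ` {X \<in> G. f X = \<sigma>} \<subseteq> {Z \<in> Pow {..<m}. card Z \<le> k}"
    proof
      fix Z assume "Z \<in> (\<lambda>X. sd X X0) ` {X \<in> G. f X = \<sigma>}"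
      then obtain X where "X \<in> G" "f X = \<sigma>" "Z = sd X X0" by auto
      moreover then have "X \<in> P" "X0 \<in> P" using GP X0 by auto
      ultimately show "Z \<in> {Z \<in> Pow {..<m}. card Z \<le> k}"
        using close[of X X0] X0 unfolding P_def sd_def by auto
    qed
    ultimately show ?thesis unfolding V_def by (intro card_inj_on_le) auto
  qed
  have Geq: "G = (\<Union>\<sigma>\<in>S. {X \<in> G. f X = \<sigma>})" using fS GP unfolding P_def by auto
  have "card G = card (\<Union>\<sigma>\<in>S. {X \<in> G. f X = \<sigma>})" using Geq by (rule arg_cong)
  also have "\<dots> \<le> (\<Sum>\<sigma>\<in>S. card {X \<in> G. f X = \<sigma>})"
    by (rule card_UN_le[OF finS])
  also have "\<dots> \<le> card S * V" using sum_mono[of S "\<lambda>\<sigma>. card {X \<in> G. f X = \<sigma>}" "\<lambda>_. V"] fib by simp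
  also have "\<dots> \<le> 2^s * V" using cardS by simp
  finally have GV: "card G \<le> 2^s * V" .
  have f1: "2^m \<le> 6 * 2^s * V" using Gbig GV by linarith
  have f2: "4^m * V \<le> 4^k * 5^m" unfolding V_def by (rule ball_bound) (simp add: k_def)
  have f3: "4 * s \<le> m" using ns by simp
  have f4: "16 * k \<le> m" unfolding k_def by simp
  have f5: "10 \<le> m"
  proof -
    have "1 \<le> (T+1)^2" by simp
    then show ?thesis using big by linarith
  qed
  show False using final_arith[OF f1 f2 f3 f4 f5] .
qed

lemma yao:
  fixes R :: "'r pmf" and I :: "'i set" and P :: "'i \<Rightarrow> 'r \<Rightarrow> bool"
  assumes finI: "finite I" and pr: "\<And>i. i \<in> I \<Longrightarrow> c \<le> measure_pmf.prob R {r. P i r}"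
  shows "\<exists>r\<in>set_pmf R. c * real (card I) \<le> real (card {i \<in> I. P i r})"
proof (rule ccontr)
  assume "\<not> ?thesis"
  then have lt: "\<And>r. r \<in> set_pmf R \<Longrightarrow> real (card {i \<in> I. P i r}) < c * real (card I)" by (simp add: not_le)
  define F where "F r = (\<Sum>i\<in>I. indicator {r. P i r} r :: real)" for r
  have Fc: "F r = real (card {i \<in> I. P i r})" for r
    unfolding F_def indicator_def using finI by (simp add: sum.If_cases Int_def conj_commute)
  have int: "integrable (measure_pmf R) (indicator {r. P i r} :: 'r \<Rightarrow> real)" for i
    by (rule integrable_real_indicator) (auto simp: measure_pmf.emeasure_finite less_top[symmetric])
  have intF: "integrable (measure_pmf R) F" unfolding F_def by (rule Bochner_Integration.integrable_sum) (rule int)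
  have EF: "measure_pmf.expectation R F = (\<Sum>i\<in>I. measure_pmf.prob R {r. P i r})"
  proof -
    have "measure_pmf.expectation R F = (\<Sum>i\<in>I. measure_pmf.expectation R (indicator {r. P i r}))"
      unfolding F_def by (rule Bochner_Integration.integral_sum) (rule int)
    also have "\<dots> = (\<Sum>i\<in>I. measure_pmf.prob R {r. P i r})"
      by (simp add: integral_indicator)
    finally show ?thesis .
  qed
  have "c * real (card I) = (\<Sum>i\<in>I. c)" by simp
  also have "\<dots> \<le> (\<Sum>i\<in>I. measure_pmf.prob R {r. P i r})" by (rule sum_mono) (rule pr)
  finally have ge: "c * real (card I) \<le> measure_pmf.expectation R F" using EF by simp
  define V where "V = F ` set_pmf R"
  have Vsub: "V \<subseteq> real ` {..card I}"
  proof
    fix v assume "v \<in> V"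
    then obtain r where "v = F r" unfolding V_def by auto
    moreover have "card {i \<in> I. P i r} \<le> card I" using finI by (intro card_mono) auto
    ultimately show "v \<in> real ` {..card I}" unfolding Fc by auto
  qed
  have finV: "finite V" using Vsub finite_subset by blast
  have neV: "V \<noteq> {}" unfolding V_def using set_pmf_not_empty by auto
  have "Max V \<in> V" using finV neV by simp
  then have Mlt: "Max V < c * real (card I)" unfolding V_def using lt Fc by auto
  have "AE r in measure_pmf R. F r \<le> Max V"
    unfolding AE_measure_pmf_iff using finV unfolding V_def by auto
  then have "measure_pmf.expectation R F \<le> Max V" by (rule measure_pmf.integral_le_const[OF intF])
  then show False using ge Mlt by simp
qed

definition blk :: "nat \<Rightarrow> nat set \<Rightarrow> nat \<Rightarrow> nat" where
  "blk L X k = 2 * k + (if k div L \<in> X then 1 else 0)"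
definition alist :: "nat \<Rightarrow> nat \<Rightarrow> nat set \<Rightarrow> nat list" where
  "alist m L X = map (blk L X) [0..<m * L]"
definition padl :: "nat \<Rightarrow> nat \<Rightarrow> nat \<Rightarrow> nat list" where
  "padl m L p = [2 * m * L..<2 * m * L + p]"
definition astream :: "nat \<Rightarrow> nat \<Rightarrow> nat \<Rightarrow> nat set \<Rightarrow> nat list" where
  "astream m L p X = alist m L X @ alist m L X @ padl m L p @ padl m L p"

lemma blk_div: "blk L X k div 2 = k" unfolding blk_def by auto

lemma blk_lt: "k < m * L \<Longrightarrow> blk L X k < 2 * m * L" unfolding blk_def by auto

lemma distinct_alist: "distinct (alist m L X)"
  unfolding alist_def
  by (simp add: distinct_map) (rule inj_onI, metis blk_div)

lemma count_distinct: "distinct xs \<Longrightarrow> count_list xs x = (if x \<in> set xs then 1 else 0)"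
  by (induction xs) auto

lemma set_alist: "set (alist m L X) = blk L X ` {..<m * L}"
  unfolding alist_def by auto

lemma card_alist: "card (set (alist m L X)) = m * L"
  using distinct_card[OF distinct_alist] unfolding alist_def by simp

lemma blockcount:
  assumes D: "D \<subseteq> {..<m}" and L: "0 < L"
  shows "card {k. k < m * L \<and> k div L \<in> D} = L * card D"
proof -
  have eq: "{k. k < m * L \<and> k div L \<in> D} = (\<lambda>(i, j). i * L + j) ` (D \<times> {..<L})"
  proof
    show "{k. k < m * L \<and> k div L \<in> D} \<subseteq> (\<lambda>(i, j). i * L + j) ` (D \<times> {..<L})"
    proof
      fix k assume "k \<in> {k. k < m * L \<and> k div L \<in> D}"
      then have "k div L \<in> D" by auto
      moreover have "k mod L < L" using L by simp
      moreover have "k = k div L * L + k mod L" by simp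
      ultimately show "k \<in> (\<lambda>(i, j). i * L + j) ` (D \<times> {..<L})" by force
    qed
  next
    show "(\<lambda>(i, j). i * L + j) ` (D \<times> {..<L}) \<subseteq> {k. k < m * L \<and> k div L \<in> D}"
    proof
      fix k assume "k \<in> (\<lambda>(i, j). i * L + j) ` (D \<times> {..<L})"
      then obtain i j where ij: "i \<in> D" "j < L" "k = i * L + j" by auto
      have "i < m" using ij D by auto
      then have "(i+1) * L \<le> m * L" by (intro mult_right_mono) auto
      moreover have "(i+1) * L = i * L + L" by simp
      ultimately have "i * L + j < m * L" using ij(2) by linarith
      moreover have "(i * L + j) div L = i" using ij L by simp
      ultimately show "k \<in> {k. k < m * L \<and> k div L \<in> D}" using ij by auto
    qed
  qed
  have inj: "inj_on (\<lambda>(i, j). i * L + j) (D \<times> {..<L})"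
  proof (rule inj_onI, clarify)
    fix i j i' j' 
    assume h: "j < L" "j' < L" "i * L + j = i' * L + j'"
    have "(i * L + j) div L = i" using h(1) L by simp
    moreover have "(i' * L + j') div L = i'" using h(2) L by simp
    ultimately have "i = i'" using h(3) by simp
    then show "i = i' \<and> j = j'" using h(3) by simp
  qed
  have finD: "finite D" using D finite_subset by blast
  show ?thesis unfolding eq card_image[OF inj] using finD by (simp add: card_cartesian_product)
qed

lemma blk_eq_iff: "blk L X k = blk L Y k' \<longleftrightarrow> k = k' \<and> ((k div L \<in> X) = (k div L \<in> Y))"
proof
  assume h: "blk L X k = blk L Y k'"
  then have "k = k'" using blk_div by metis
  then show "k = k' \<and> ((k div L \<in> X) = (k div L \<in> Y))" using h unfolding blk_def by (auto split: if_splits)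
qed (auto simp: blk_def)

lemma stream_facts:
  assumes X: "X \<subseteq> {..<m}" and Y: "Y \<subseteq> {..<m}" and L: "0 < L"
  shows "set (astream m L p X @ alist m L Y) \<subseteq> {..<2 * m * L + p}"
    and "num_heavy (astream m L p X @ alist m L Y) = m * L + p"
    and "F0 (astream m L p X @ alist m L Y) = m * L + p + L * ham X Y"
proof -
  define xs where "xs = astream m L p X @ alist m L Y"
  define A where "A = set (alist m L X)"
  define B where "B = set (alist m L Y)"
  define Pd where "Pd = set (padl m L p)"
  have Alt: "a < 2 * m * L" if "a \<in> A" for a using that blk_lt unfolding A_def set_alist by auto
  have Blt: "a < 2 * m * L" if "a \<in> B" for a using that blk_lt unfolding B_def set_alist by auto
  have Pd: "Pd = {2 * m * L..<2 * m * L + p}" unfolding Pd_def padl_def by simp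
  have setxs: "set xs = A \<union> Pd \<union> B" unfolding xs_def astream_def A_def B_def Pd_def by auto
  show "set (astream m L p X @ alist m L Y) \<subseteq> {..<2 * m * L + p}"
    using setxs Alt Blt Pd unfolding xs_def by fastforce
  have fq: "freq xs i = 2 * (if i \<in> A then 1 else 0) + 2 * (if i \<in> Pd then 1 else 0) + (if i \<in> B then 1 else 0)" for i
    unfolding freq_def xs_def astream_def A_def B_def Pd_def
    by (simp add: count_distinct distinct_alist padl_def)
  have heavy: "{i. freq xs i > 1} = A \<union> Pd" by (auto simp: fq)
  have nz: "{i. freq xs i \<noteq> 0} = (A \<union> Pd) \<union> (B - A)" by (auto simp: fq)
  have finA: "finite A" and finB: "finite B" and finPd: "finite Pd" unfolding A_def B_def Pd_def by auto
  have disj: "A \<inter> Pd = {}" using Alt Pd by fastforce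
  have cAP: "card (A \<union> Pd) = m * L + p"
    using card_Un_disjoint[OF finA finPd disj] card_alist[of m L X] Pd unfolding A_def by simp
  show "num_heavy (astream m L p X @ alist m L Y) = m * L + p"
    unfolding num_heavy_def xs_def[symmetric] heavy cAP ..
  have BA: "B - A = blk L Y ` {k. k < m * L \<and> k div L \<in> sd X Y}"
  proof
    show "B - A \<subseteq> blk L Y ` {k. k < m * L \<and> k div L \<in> sd X Y}"
    proof
      fix x assume "x \<in> B - A"
      then obtain k where k: "k < m * L" "x = blk L Y k" "x \<notin> A" unfolding B_def set_alist by auto
      have "k div L \<in> sd X Y"
      proof (rule ccontr)
        assume "k div L \<notin> sd X Y"
        then have "(k div L \<in> X) = (k div L \<in> Y)" unfolding sd_def by auto
        then have "blk L X k = x" using k(2) blk_eq_iff by metis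
        then have "x \<in> A" using k(1) unfolding A_def set_alist by auto
        then show False using k(3) by simp
      qed
      then show "x \<in> blk L Y ` {k. k < m * L \<and> k div L \<in> sd X Y}" using k by auto
    qed
  next
    show "blk L Y ` {k. k < m * L \<and> k div L \<in> sd X Y} \<subseteq> B - A"
    proof
      fix x assume "x \<in> blk L Y ` {k. k < m * L \<and> k div L \<in> sd X Y}"
      then obtain k where k: "k < m * L" "k div L \<in> sd X Y" "x = blk L Y k" by auto
      have "x \<in> B" using k unfolding B_def set_alist by auto
      moreover have "x \<notin> A"
      proof
        assume "x \<in> A"
        then obtain k' where "blk L X k' = blk L Y k" using k(3) unfolding A_def set_alist by auto
        then have "k' = k" "(k div L \<in> X) = (k div L \<in> Y)" using blk_eq_iff by metis+
        then show False using k(2) unfolding sd_def by auto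
      qed
      ultimately show "x \<in> B - A" by simp
    qed
  qed
  have injY: "inj_on (blk L Y) {k. k < m * L \<and> k div L \<in> sd X Y}" by (rule inj_onI) (metis blk_div)
  have sdm: "sd X Y \<subseteq> {..<m}" using X Y unfolding sd_def by auto
  have cBA: "card (B - A) = L * ham X Y"
    unfolding BA card_image[OF injY] ham_def using blockcount[OF sdm L] .
  have disj2: "(A \<union> Pd) \<inter> (B - A) = {}" using Blt Pd by fastforce
  have "F0 xs = card (A \<union> Pd) + card (B - A)"
    unfolding F0_def nz by (rule card_Un_disjoint) (use finA finB finPd disj2 in auto)
  then show "F0 (astream m L p X @ alist m L Y) = m * L + p + L * ham X Y"
    unfolding xs_def using cAP cBA by simp
qed

lemma fold_len:
  assumes "uses_space R init upd n s" "r \<in> set_pmf R" "set xs \<subseteq> {..<n}" "length st = s"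
  shows "length (fold (upd r) xs st) = s"
  using assms(3,4)
proof (induction xs arbitrary: st)
  case Nil then show ?case by simp
next
  case (Cons x xs)
  have "length (upd r x st) = s" using assms(1,2) Cons.prems unfolding uses_space_def by auto
  then show ?case using Cons.IH[of "upd r x st"] Cons.prems by simp
qed

lemma run_len:
  assumes "uses_space R init upd n s" "r \<in> set_pmf R" "set xs \<subseteq> {..<n}"
  shows "length (run_stream init upd r xs) = s"
  unfolding run_stream_def
  by (rule fold_len[OF assms]) (use assms(1,2) in \<open>auto simp: uses_space_def\<close>)

lemma big_case:
  fixes eps :: real and C m L p T s n :: nat and R :: "nat pmf"
  assumes eps: "0 < eps" "eps < 1" and m1: "1 \<le> m" and Ld: "L = C div m" and pd: "p = C - m * L"
    and m2: "2 * m \<le> C" and Td: "T = nat \<lfloor>8 * eps * m\<rfloor>" and big: "400 * (T+1)^2 < m"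
    and nN: "2 * m * L + p \<le> n" and sp: "uses_space R init upd n s"
    and ap: "approximates_F0 R init upd out n eps C"
  shows "m < 4 * s"
proof -
  have L1: "1 \<le> L"
  proof -
    have "m div m \<le> C div m" by (rule div_le_mono) (use m2 in linarith)
    then show ?thesis unfolding Ld using m1 by simp
  qed
  have CmL: "m * L + p = C" unfolding pd Ld by (simp add: minus_mod_eq_mult_div[symmetric])
  define U where "U = Pow {..<m::nat}"
  define strm where "strm X Y = astream m L p X @ alist m L Y" for X Y
  define okr where "okr r X Y = ((1 - eps) * real (F0 (strm X Y)) \<le> out r (run_stream init upd r (strm X Y)) \<and>
              out r (run_stream init upd r (strm X Y)) \<le> (1 + eps) * real (F0 (strm X Y)))" for r X Y
  have sub: "set (strm X Y) \<subseteq> {..<n}" if "X \<subseteq> {..<m}" "Y \<subseteq> {..<m}" for X Y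
    using stream_facts(1)[OF that, of L p] L1 nN unfolding strm_def by auto
  have nh: "num_heavy (strm X Y) = C" if "X \<subseteq> {..<m}" "Y \<subseteq> {..<m}" for X Y
    using stream_facts(2)[OF that, of L p] L1 CmL unfolding strm_def by auto
  have F0e: "F0 (strm X Y) = C + L * ham X Y" if "X \<subseteq> {..<m}" "Y \<subseteq> {..<m}" for X Y
    using stream_facts(3)[OF that, of L p] L1 CmL unfolding strm_def by auto
  have finI: "finite (U \<times> U)" unfolding U_def by simp
  have "\<exists>r\<in>set_pmf R. 2/3 * real (card (U \<times> U)) \<le> real (card {i \<in> U \<times> U. okr r (fst i) (snd i)})"
  proof (rule yao[OF finI])
    fix i assume "i \<in> U \<times> U"
    then have "fst i \<subseteq> {..<m}" "snd i \<subseteq> {..<m}" unfolding U_def by auto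
    then show "2/3 \<le> measure_pmf.prob R {r. okr r (fst i) (snd i)}"
      using ap sub nh unfolding approximates_F0_def okr_def by auto
  qed
  then obtain r where r: "r \<in> set_pmf R"
    and cntr: "2/3 * real (card (U \<times> U)) \<le> real (card {i \<in> U \<times> U. okr r (fst i) (snd i)})" by blast
  define f where "f X = run_stream init upd r (astream m L p X)" for X
  define S where "S = {bs :: bool list. length bs = s}"
  have finS: "finite S" and cardS: "card S \<le> 2^s"
  proof -
    have "S = {xs. set xs \<subseteq> (UNIV :: bool set) \<and> length xs = s}" unfolding S_def by auto
    moreover have "finite {xs. set xs \<subseteq> (UNIV :: bool set) \<and> length xs = s}"
      by (rule finite_lists_length_eq) simp
    ultimately show "finite S" "card S \<le> 2^s" using card_lists_length_eq[of "UNIV :: bool set" s]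
      by auto
  qed
  have fS: "f X \<in> S" if "X \<in> Pow {..<m}" for X
  proof -
    have "set (astream m L p X) \<subseteq> {..<n}" using sub[of X "{}"] that unfolding strm_def by auto
    then show ?thesis unfolding S_def f_def using run_len[OF sp r] by auto
  qed
  have runsplit: "run_stream init upd r (strm X Y) = fold (upd r) (alist m L Y) (f X)" for X Y
    unfolding strm_def f_def run_stream_def by simp
  have hm: "ham X Y \<le> m" if "X \<subseteq> {..<m}" "Y \<subseteq> {..<m}" for X Y
  proof -
    have "sd X Y \<subseteq> {..<m}" using that unfolding sd_def by auto
    then show ?thesis unfolding ham_def using card_mono[of "{..<m}" "sd X Y"] by simp
  qed
  have C2L: "real C \<le> 2 * real m * real L"
  proof -
    have "C mod m < m" using m1 by simp
    moreover have "C = m * L + C mod m" unfolding Ld by simp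
    ultimately have "C < m * (L + 1)" by (simp add: algebra_simps)
    also have "\<dots> \<le> 2 * m * L" using L1 by (simp add: algebra_simps)
    finally have "C \<le> 2 * m * L" by simp
    then have "real C \<le> real (2 * m * L)" by (simp only: of_nat_le_iff)
    then show ?thesis by simp
  qed
  have cons: "\<bar>int (ham X Y) - int (ham X' Y)\<bar> \<le> int T"
    if X: "X \<in> Pow {..<m}" and X': "X' \<in> Pow {..<m}" and Y: "Y \<in> Pow {..<m}"
      and fe: "f X = f X'" and o1: "okr r X Y" and o2: "okr r X' Y" for X X' Y
  proof -
    define v where "v = out r (fold (upd r) (alist m L Y) (f X))"
    have Xs: "X \<subseteq> {..<m}" "X' \<subseteq> {..<m}" "Y \<subseteq> {..<m}" using X X' Y by auto
    define h where "h = real (ham X Y)"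
    define h' where "h' = real (ham X' Y)"
    have F1: "real (F0 (strm X Y)) = C + L * h" unfolding h_def using F0e[OF Xs(1,3)] by simp
    have F2: "real (F0 (strm X' Y)) = C + L * h'" unfolding h'_def using F0e[OF Xs(2,3)] by simp
    have v1: "(1 - eps) * (C + L * h) \<le> v \<and> v \<le> (1 + eps) * (C + L * h)"
      using o1 unfolding okr_def runsplit v_def F1 .
    have v2: "(1 - eps) * (C + L * h') \<le> v \<and> v \<le> (1 + eps) * (C + L * h')"
      using o2 unfolding okr_def runsplit v_def F2 fe .
    have hb: "h \<le> m" "h' \<le> m" "0 \<le> h" "0 \<le> h'" unfolding h_def h'_def using hm Xs by auto
    have Lh: "L * h \<le> C" "L * h' \<le> C"
    proof -
      have "real L * h \<le> real L * m" using hb by (intro mult_left_mono) auto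
      moreover have "real L * m \<le> C" using CmL by (metis le_add1 mult.commute of_nat_le_iff of_nat_mult)
      ultimately show "L * h \<le> C" by simp
      have "real L * h' \<le> real L * m" using hb by (intro mult_left_mono) auto
      then show "L * h' \<le> C" using \<open>real L * m \<le> C\<close> by simp
    qed
    have "\<bar>L * h - L * h'\<bar> \<le> eps * ((C + L * h) + (C + L * h'))"
      using v1 v2 by (simp add: algebra_simps abs_le_iff)
    also have "\<dots> \<le> eps * (4 * C)" using Lh eps by (intro mult_left_mono) auto
    finally have a1: "L * \<bar>h - h'\<bar> \<le> eps * (4 * C)"
      by (simp add: abs_mult right_diff_distrib[symmetric])
    have "eps * (4 * C) \<le> eps * (8 * m * L)" using C2L eps by (intro mult_left_mono) (auto simp: algebra_simps)
    with a1 have "L * \<bar>h - h'\<bar> \<le> L * (8 * eps * m)" by (simp add: algebra_simps)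
    then have a2: "\<bar>h - h'\<bar> \<le> 8 * eps * m" using L1 by (simp add: mult_le_cancel_left_pos)
    have "\<bar>real_of_int (int (ham X Y) - int (ham X' Y))\<bar> \<le> 8 * eps * m"
      using a2 unfolding h_def h'_def by simp
    then have "\<bar>int (ham X Y) - int (ham X' Y)\<bar> \<le> \<lfloor>8 * eps * m\<rfloor>"
      by (metis floor_mono floor_of_int of_int_abs)
    moreover have "\<lfloor>8 * eps * m\<rfloor> = int T" unfolding Td using eps by simp
    ultimately show ?thesis by simp
  qed
  have cnt: "2/3 * 4^m \<le> real (card (SIGMA X:Pow {..<m}. {Y \<in> Pow {..<m}. okr r X Y}))"
  proof -
    have e: "(SIGMA X:Pow {..<m}. {Y \<in> Pow {..<m}. okr r X Y}) = {i \<in> U \<times> U. okr r (fst i) (snd i)}"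
      unfolding U_def by auto
    have "card (U \<times> U) = 2^m * 2^m" unfolding U_def by (simp add: card_cartesian_product card_Pow)
    also have "\<dots> = 4^m" by (simp add: power_mult_distrib[symmetric])
    finally show ?thesis using cntr unfolding e by simp
  qed
  show ?thesis by (rule core[OF finS cardS fS cons cnt big])
qed

lemma small_case:
  fixes eps :: real and C n s K :: nat and R :: "nat pmf"
  assumes eps: "0 < eps" "eps < 1" and Kd: "K = nat \<lceil>2 * C / (1 - eps)\<rceil> + 1"
    and nN: "C + K \<le> n" and sp: "uses_space R init upd n s"
    and ap: "approximates_F0 R init upd out n eps C"
  shows "1 \<le> s"
proof (rule ccontr)
  assume "\<not> 1 \<le> s"
  then have s0: "s = 0" by simp
  define xs1 where "xs1 = [0..<C] @ [0..<C]"
  define xs2 where "xs2 = xs1 @ [C..<C+K]"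
  define st where "st b = (if b then xs2 else xs1)" for b
  have f1: "freq xs1 i = (if i < C then 2 else 0)" for i
    unfolding freq_def xs1_def by (simp add: count_distinct)
  have f2: "freq xs2 i = (if i < C then 2 else 0) + (if C \<le> i \<and> i < C + K then 1 else 0)" for i
    unfolding freq_def xs2_def xs1_def by (simp add: count_distinct)
  have h1: "num_heavy xs1 = C" unfolding num_heavy_def f1 by simp
  have h2: "num_heavy xs2 = C"
  proof -
    have "{i. 1 < freq xs2 i} = {..<C}" by (auto simp: f2)
    then show ?thesis unfolding num_heavy_def by simp
  qed
  have F1: "F0 xs1 = C" unfolding F0_def f1 by simp
  have F2: "F0 xs2 = C + K"
  proof -
    have "{i. freq xs2 i \<noteq> 0} = {..<C+K}" by (auto simp: f2)
    then show ?thesis unfolding F0_def by simp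
  qed
  have sub: "set (st b) \<subseteq> {..<n}" for b using nN unfolding st_def xs1_def xs2_def by auto
  have nh: "num_heavy (st b) = C" for b using h1 h2 unfolding st_def by simp
  define okr where "okr b r = ((1 - eps) * real (F0 (st b)) \<le> out r (run_stream init upd r (st b)) \<and>
              out r (run_stream init upd r (st b)) \<le> (1 + eps) * real (F0 (st b)))" for b r
  have "\<exists>r\<in>set_pmf R. 2/3 * real (card (UNIV :: bool set)) \<le> real (card {b \<in> UNIV. okr b r})"
  proof (rule yao)
    fix b :: bool
    show "2/3 \<le> measure_pmf.prob R {r. okr b r}"
      using ap sub[of b] nh[of b] unfolding approximates_F0_def okr_def by auto
  qed simp
  then obtain r where r: "r \<in> set_pmf R" and c: "2/3 * 2 \<le> real (card {b \<in> UNIV. okr b r})" by auto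
  have "{b \<in> UNIV. okr b r} = UNIV"
  proof (rule ccontr)
    assume "{b \<in> UNIV. okr b r} \<noteq> UNIV"
    then obtain b0 where "\<not> okr b0 r" by auto
    then have "{b \<in> UNIV. okr b r} \<subseteq> {\<not> b0}" by auto (metis (full_types))
    then have "card {b \<in> UNIV. okr b r} \<le> 1" by (metis card.empty card.insert empty_iff finite.emptyI
          card_mono finite.insertI insert_absorb2 le_numeral_extra(4) One_nat_def)
    then show False using c by simp
  qed
  then have o1: "okr False r" and o2: "okr True r" by auto
  have len: "run_stream init upd r (st b) = []" for b
    using run_len[OF sp r sub[of b]] s0 by simp
  define v where "v = out r []"
  have a1: "v \<le> (1 + eps) * C" using o1 len[of False] F1 unfolding okr_def v_def st_def by simp
  have a2: "(1 - eps) * (C + K) \<le> v" using o2 len[of True] F2 unfolding okr_def v_def st_def by simp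
  have "2 * C / (1 - eps) \<le> real (nat \<lceil>2 * C / (1 - eps)\<rceil>)" by linarith
  then have "2 * C / (1 - eps) + 1 \<le> real K" unfolding Kd by simp
  then have "(1 - eps) * (2 * C / (1 - eps) + 1) \<le> (1 - eps) * K" using eps by (intro mult_left_mono) auto
  moreover have "(1 - eps) * (2 * C / (1 - eps)) = 2 * C" using eps by simp
  ultimately have "2 * C + (1 - eps) \<le> (1 - eps) * K" by (simp add: distrib_left)
  moreover have "eps * real C \<le> 1 * real C" using eps by (intro mult_right_mono) auto
  ultimately have "(1 + eps) * C < (1 - eps) * (C + K)" using eps by (simp add: algebra_simps)
  then show False using a1 a2 by simp
qed

lemma param_big:
  fixes eps M K1 :: real and m T :: nat
  assumes eps: "0 < eps" "eps < 1" and K1: "K1 = 102400" and MK: "K1 * 2000 \<le> M"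
    and Me: "M \<le> 1 / eps^2" and md: "m = nat \<lfloor>M / K1\<rfloor>" and Td: "T = nat \<lfloor>8 * eps * m\<rfloor>"
  shows "400 * (T+1)^2 < m" and "real m > M / K1 - 1" and "real m \<le> M / K1" and "1999 \<le> real m"
proof -
  have K1p: "K1 > 0" using K1 by simp
  have a: "M / K1 \<ge> 2000" using MK K1p by (simp add: field_simps)
  have mr: "real m = real_of_int \<lfloor>M / K1\<rfloor>" unfolding md using a by simp
  show m1: "real m > M / K1 - 1" "real m \<le> M / K1" unfolding mr by linarith+
  show m2: "1999 \<le> real m" using m1 a by linarith
  have Tr: "real T \<le> 8 * eps * m"
  proof -
    have "0 \<le> 8 * eps * m" using eps by simp
    then have "real T = real_of_int \<lfloor>8 * eps * m\<rfloor>" unfolding Td by simp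
    then show ?thesis by linarith
  qed
  have T0: "0 \<le> real T" by simp
  have em: "eps^2 * m \<le> 1 / K1"
  proof -
    have "eps^2 * m \<le> eps^2 * (M / K1)" using m1 by (intro mult_left_mono) auto
    also have "\<dots> = (eps^2 * M) / K1" by simp
    also have "\<dots> \<le> 1 / K1"
    proof (rule divide_right_mono)
      have "eps^2 * M \<le> eps^2 * (1 / eps^2)" using Me by (intro mult_left_mono) auto
      then show "eps^2 * M \<le> 1" using eps by simp
    qed (use K1p in simp)
    finally show ?thesis .
  qed
  have "real T ^ 2 \<le> (8 * eps * m)^2" using Tr T0 by (intro power_mono) auto
  also have "\<dots> = 64 * (eps^2 * m) * m" by (simp add: power2_eq_square algebra_simps)
  also have "\<dots> \<le> 64 * (1 / K1) * m" using em by (intro mult_right_mono mult_left_mono) auto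
  finally have T2: "real T ^ 2 \<le> 64 / K1 * m" by simp
  have q1: "(real T + 1)^2 = real T ^ 2 + 2 * real T + 1" by (simp add: power2_eq_square algebra_simps)
  have q2: "(real T - 1)^2 = real T ^ 2 - 2 * real T + 1" by (simp add: power2_eq_square algebra_simps)
  have q3: "0 \<le> (real T - 1)^2" by simp
  have "(real T + 1)^2 \<le> 2 * real T ^ 2 + 2" using q1 q2 q3 by linarith
  then have "400 * (real T + 1)^2 \<le> 800 * (64 / K1 * m) + 800" using T2 by linarith
  also have "\<dots> = m / 2 + 800" unfolding K1 by simp
  also have "\<dots> < m" using m2 by simp
  finally have f: "400 * (real T + 1)^2 < real m" .
  have e: "real (400 * (T+1)^2) = 400 * (real T + 1)^2" by simp
  have "real (400 * (T+1)^2) < real m" using e f by linarith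
  then show "400 * (T+1)^2 < m" by (simp only: of_nat_less_iff)
qed

theorem theorem5p10:
  "\<exists>c0 > 0. \<exists>c > 0. \<forall>eps :: real. \<forall>C :: nat.
     0 < eps \<and> eps < 1 \<and> real C \<ge> c0 / eps \<longrightarrow>
     (\<exists>N :: nat. \<forall>n \<ge> N. \<forall>(R :: nat pmf) init upd out s.
        uses_space R init upd n s \<and> approximates_F0 R init upd out n eps C \<longrightarrow>
        real s \<ge> c * min (1 / eps^2) (real C))"
proof -
  have main: "\<exists>N :: nat. \<forall>n \<ge> N. \<forall>(R :: nat pmf) init upd out s.
        uses_space R init upd n s \<and> approximates_F0 R init upd out n eps C \<longrightarrow>
        real s \<ge> 1 / (102400 * 2000) * min (1 / eps^2) (real C)"
    if "0 < eps \<and> eps < 1 \<and> real C \<ge> 1 / eps" for eps :: real and C :: nat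
  proof -
  from that have eps: "0 < eps" "eps < 1" by auto
  define K1 :: real where "K1 = 102400"
  define M where "M = min (1 / eps^2) (real C)"
  have M0: "0 \<le> M" unfolding M_def by simp
  have cM: "1 / (102400 * 2000) * M = M / (K1 * 2000)" unfolding K1_def by simp
  show "\<exists>N :: nat. \<forall>n \<ge> N. \<forall>(R :: nat pmf) init upd out s.
        uses_space R init upd n s \<and> approximates_F0 R init upd out n eps C \<longrightarrow>
        real s \<ge> 1 / (102400 * 2000) * min (1 / eps^2) (real C)"
  proof (cases "M < K1 * 2000")
    case True
    define K where "K = nat \<lceil>2 * C / (1 - eps)\<rceil> + 1"
    show ?thesis
    proof (intro exI[of _ "C + K"] allI impI)
      fix n :: nat and R :: "nat pmf" and init upd out s
      assume "C + K \<le> n" and h: "uses_space R init upd n s \<and> approximates_F0 R init upd out n eps C"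
      then have "1 \<le> s" using small_case[OF eps K_def] by blast
      moreover have "M / (K1 * 2000) < 1" using True unfolding K1_def by simp
      ultimately have "1 / (102400 * 2000) * M \<le> real s" using cM by linarith
      then show "real s \<ge> 1 / (102400 * 2000) * min (1 / eps^2) (real C)"
        unfolding M_def .
    qed
  next
    case False
    then have MK: "K1 * 2000 \<le> M" by simp
    define m where "m = nat \<lfloor>M / K1\<rfloor>"
    define T where "T = nat \<lfloor>8 * eps * m\<rfloor>"
    define L where "L = C div m"
    define p where "p = C - m * L"
    have Me: "M \<le> 1 / eps^2" and MC: "M \<le> real C" unfolding M_def by auto
    note pb = param_big[OF eps K1_def MK Me m_def T_def]
    have m1: "1 \<le> m" using pb(4) by simp
    have m2: "2 * m \<le> C"
    proof -
      have "real m \<le> M / K1" by (rule pb(3))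
      also have "\<dots> \<le> real C / 2" using MC unfolding K1_def by simp
      finally have "real (2 * m) \<le> real C" by simp
      then show ?thesis by (simp only: of_nat_le_iff)
    qed
    show ?thesis
    proof (intro exI[of _ "2 * m * L + p"] allI impI)
      fix n :: nat and R :: "nat pmf" and init upd out s
      assume "2 * m * L + p \<le> n" and h: "uses_space R init upd n s \<and> approximates_F0 R init upd out n eps C"
      then have "m < 4 * s" using big_case[OF eps m1 L_def p_def m2 T_def pb(1)] by blast
      then have "real m < 4 * real s" by linarith
      then have "M / K1 - 1 < 4 * real s" using pb(2) by linarith
      moreover have "M / (K1 * 2000) \<le> (M / K1 - 1) / 4"
      proof -
        have "M / K1 \<ge> 2000" using MK unfolding K1_def by simp
        then have "M / K1 / 2000 \<le> (M / K1 - 1) / 4" by simp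
        then show ?thesis by simp
      qed
      moreover have "(M / K1 - 1) / 4 < real s"
      proof -
        define q where "q = M / K1 - 1"
        have "q < 4 * real s" unfolding q_def by fact
        then have "q / 4 < real s" by simp
        then show ?thesis unfolding q_def .
      qed
      ultimately have "M / (K1 * 2000) < real s" by linarith
      then have "1 / (102400 * 2000) * M \<le> real s" unfolding cM by simp
      then show "real s \<ge> 1 / (102400 * 2000) * min (1 / eps^2) (real C)"
        unfolding M_def .
    qed
  qed
  qed
  have "(1::real) > 0" "1 / (102400 * 2000) > (0::real)" by simp_all
  then show ?thesis using main by blast
qed

end
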